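(* For every prime $p>7$, $$\sum_{k=1}^{\frac{p-1}{2}}\frac{2H_{2k}-H_k}{k^4}\equiv\frac{31}{2}B_{p-5}\pmod p.$$
   Context: $H_n=\sum_{j=1}^n 1/j$. Bernoulli numbers: $\sum_{n\ge0}B_nt^n/n!=t/(e^t-1)$. Congruences are between $p$-adic integers. *)

theory Defs
  imports "HOL-Analysis.Analysis" "HOL-Computational_Algebra.Formal_Power_Series"
begin

definition bernoulli_num :: "nat \<Rightarrow> rat" where
  "bernoulli_num n = fact n * fps_nth (fps_X / (fps_exp 1 - 1)) n"

definition harm_rat :: "nat \<Rightarrow> rat" where
  "harm_rat n = (\<Sum>j=1..n. 1 / of_nat j)"

text \<open>Congruence of rationals modulo p, in the ring of p-integral rationals
  (= congruence of p-adic integers): a - b, written in lowest terms, has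
  denominator prime to p and numerator divisible by p.\<close>
definition rat_cong_mod :: "rat \<Rightarrow> rat \<Rightarrow> nat \<Rightarrow> bool" where
  "rat_cong_mod a b p =
     (case quotient_of (a - b) of (n, d) \<Rightarrow> int p dvd n \<and> coprime d (int p))"

end

theory Submission
  imports Defs "HOL-Number_Theory.Number_Theory"
begin

definition gg :: "nat \<Rightarrow> rat" where
  "gg n = (harm_rat n - 1 / (2 * of_nat n)) * (1 / of_nat n ^ 4)"



definition bfps :: "rat fps" where "bfps = fps_X / (fps_exp 1 - 1)"

lemma bfps_eq: "bfps * (fps_exp 1 - 1) = fps_X"
proof -
  have ne: "(fps_exp 1 - 1 :: rat fps) \<noteq> 0"
  proof
    assume "(fps_exp 1 - 1 :: rat fps) = 0"
    hence "fps_nth (fps_exp 1 - 1 :: rat fps) 1 = 0" by simp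
    thus False by simp
  qed
  have "subdegree (fps_exp 1 - 1 :: rat fps) \<le> 1"
    by (rule subdegree_leI) simp
  hence "fps_X div (fps_exp 1 - 1) * (fps_exp 1 - 1) = (fps_X :: rat fps)"
    using ne by (intro fps_times_divide_eq) auto
  thus ?thesis by (simp add: bfps_def)
qed

lemma bern_def2: "bernoulli_num n = fact n * fps_nth bfps n"
  by (simp add: bernoulli_num_def bfps_def)

definition bp :: "nat \<Rightarrow> rat \<Rightarrow> rat" where
  "bp M x = (\<Sum>i=0..M. of_nat (M choose i) * bernoulli_num i * x^(M-i))"

lemma bp_fps: "bp M x = fact M * fps_nth (bfps * fps_exp x) M"
proof -
  have "fact M * fps_nth (bfps * fps_exp x) M = (\<Sum>i=0..M. fact M * (fps_nth bfps i * (x^(M-i) / fact (M-i))))"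
    by (simp add: fps_mult_nth sum_distrib_left)
  also have "\<dots> = (\<Sum>i=0..M. of_nat (M choose i) * bernoulli_num i * x^(M-i))"
  proof (rule sum.cong[OF refl])
    fix i assume "i \<in> {0..M}"
    hence "i \<le> M" by simp
    then show "fact M * (fps_nth bfps i * (x^(M-i) / fact (M-i))) = of_nat (M choose i) * bernoulli_num i * x^(M-i)"
      by (simp add: binomial_fact bern_def2 field_simps)
  qed
  finally show ?thesis by (simp add: bp_def)
qed

lemma bp_diff: "bp M (x+1) - bp M x = of_nat M * x^(M-1)"
proof -
  have "bp M (x+1) - bp M x = fact M * fps_nth ((bfps * (fps_exp 1 - 1)) * fps_exp x) M"
    by (simp add: bp_fps fps_exp_add_mult algebra_simps)
  also have "\<dots> = fact M * fps_nth (fps_X * fps_exp x) M" by (simp add: bfps_eq)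
  also have "\<dots> = of_nat M * x^(M-1)"
    by (cases M) (auto simp: fact_Suc field_simps)
  finally show ?thesis .
qed

lemma faulhaber: "(\<Sum>k<n. (of_nat k::rat)^m) = (bp (Suc m) (of_nat n) - bp (Suc m) 0) / of_nat (Suc m)"
proof (induction n)
  case 0 then show ?case by simp
next
  case (Suc n)
  have "bp (Suc m) (of_nat n + 1) - bp (Suc m) (of_nat n) = of_nat (Suc m) * of_nat n ^ m"
    using bp_diff[of "Suc m" "of_nat n"] by simp
  then show ?case using Suc by (simp add: field_simps)
qed

lemma bp_sub0: "bp (Suc m) x - bp (Suc m) 0 = (\<Sum>i=0..m. of_nat (Suc m choose i) * bernoulli_num i * x^(Suc m-i))"
proof -
  have z: "(\<Sum>i=0..m. of_nat (Suc m choose i) * bernoulli_num i * (0::rat)^(Suc m-i)) = 0"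
    by (rule sum.neutral) auto
  show ?thesis unfolding bp_def sum.atLeast0_atMost_Suc using z by simp
qed

lemma bern_rec: "(\<Sum>i=0..n. of_nat (Suc n choose i) * bernoulli_num i) = (if n = 0 then 1 else 0)"
proof -
  have "bp (Suc n) (0+1) - bp (Suc n) 0 = of_nat (Suc n) * 0^n" using bp_diff[of "Suc n" 0] by simp
  moreover have "bp (Suc n) (0+1) - bp (Suc n) 0 = (\<Sum>i=0..n. of_nat (Suc n choose i) * bernoulli_num i)"
    using bp_sub0[of n 1] by simp
  ultimately show ?thesis by (cases n) auto
qed

definition pint :: "nat \<Rightarrow> rat \<Rightarrow> bool" where
  "pint p x \<longleftrightarrow> (\<exists>a b. x = of_int a / of_int b \<and> \<not> int p dvd b)"
definition pz :: "nat \<Rightarrow> rat \<Rightarrow> bool" where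
  "pz p x \<longleftrightarrow> (\<exists>a b. x = of_int a / of_int b \<and> int p dvd a \<and> \<not> int p dvd b)"
definition cg :: "nat \<Rightarrow> rat \<Rightarrow> rat \<Rightarrow> bool" where
  "cg p x y \<longleftrightarrow> pz p (x - y)"

context
  fixes p :: nat
  assumes pp: "prime p"
begin

lemma pi: "prime (int p)" using pp by simp

lemma ndvd_mult: "\<not> int p dvd a \<Longrightarrow> \<not> int p dvd b \<Longrightarrow> \<not> int p dvd (a*b)"
  using pi by (simp add: prime_dvd_mult_iff)

lemma ndvd_1: "\<not> int p dvd 1"
  using pi by (meson not_prime_unit)

lemma pint_of_int [simp]: "pint p (of_int a)"
  unfolding pint_def using ndvd_1 by (intro exI[of _ a] exI[of _ 1]) auto

lemma pint_of_nat [simp]: "pint p (of_nat a)"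
  using pint_of_int[of "int a"] by simp

lemma pint_numeral [simp]: "pint p (numeral n)"
  using pint_of_nat[of "numeral n"] by simp

lemma pint_0 [simp]: "pint p 0" and pint_1 [simp]: "pint p 1"
  using pint_of_nat[of 0] pint_of_nat[of 1] by auto

lemma pint_add [simp]: "pint p x \<Longrightarrow> pint p y \<Longrightarrow> pint p (x + y)"
proof -
  assume "pint p x" "pint p y"
  then obtain a b c d where x: "x = of_int a / of_int b" "\<not> int p dvd b"
    and y: "y = of_int c / of_int d" "\<not> int p dvd d" unfolding pint_def by blast
  have b0: "b \<noteq> 0" "d \<noteq> 0" using x y by auto
  have "x + y = of_int (a*d + c*b) / of_int (b*d)" using x y b0 by (simp add: field_simps)
  thus ?thesis unfolding pint_def using ndvd_mult[OF x(2) y(2)] by blast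
qed

lemma pint_mult [simp]: "pint p x \<Longrightarrow> pint p y \<Longrightarrow> pint p (x * y)"
proof -
  assume "pint p x" "pint p y"
  then obtain a b c d where x: "x = of_int a / of_int b" "\<not> int p dvd b"
    and y: "y = of_int c / of_int d" "\<not> int p dvd d" unfolding pint_def by blast
  have "x * y = of_int (a*c) / of_int (b*d)" using x y by (simp add: field_simps)
  thus ?thesis unfolding pint_def using ndvd_mult[OF x(2) y(2)] by blast
qed

lemma pint_uminus [simp]: "pint p x \<Longrightarrow> pint p (- x)"
  using pint_mult[of "-1" x] pint_of_int[of "-1"] by simp

lemma pint_diff [simp]: "pint p x \<Longrightarrow> pint p y \<Longrightarrow> pint p (x - y)"
  using pint_add[of x "-y"] by simp

lemma pint_power [simp]: "pint p x \<Longrightarrow> pint p (x ^ n)"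
  by (induction n) auto

lemma pint_sum: "(\<And>i. i \<in> A \<Longrightarrow> pint p (f i)) \<Longrightarrow> pint p (sum f A)"
  by (induction A rule: infinite_finite_induct) auto

lemma pint_div_int: "pint p x \<Longrightarrow> \<not> int p dvd a \<Longrightarrow> pint p (x / of_int a)"
proof -
  assume "pint p x" and a: "\<not> int p dvd a"
  then obtain c d where x: "x = of_int c / of_int d" "\<not> int p dvd d" unfolding pint_def by blast
  have "x / of_int a = of_int c / of_int (d * a)" using x by simp
  thus ?thesis unfolding pint_def using ndvd_mult[OF x(2) a] by blast
qed

lemma pint_div_nat: "pint p x \<Longrightarrow> 0 < k \<Longrightarrow> k < p \<Longrightarrow> pint p (x / of_nat k)"
  using pint_div_int[of x "int k"] nat_dvd_not_less[of k p] by simp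

lemma pz_imp_pint: "pz p x \<Longrightarrow> pint p x"
  unfolding pz_def pint_def by blast

lemma pz_of_int: "int p dvd a \<Longrightarrow> pz p (of_int a)"
  unfolding pz_def using ndvd_1 by (intro exI[of _ a] exI[of _ 1]) auto

lemma pz_0 [simp]: "pz p 0"
  using pz_of_int[of 0] by simp

lemma pz_mult: "pz p x \<Longrightarrow> pint p y \<Longrightarrow> pz p (x * y)"
proof -
  assume "pz p x" "pint p y"
  then obtain a b c d where x: "x = of_int a / of_int b" "int p dvd a" "\<not> int p dvd b"
    and y: "y = of_int c / of_int d" "\<not> int p dvd d" unfolding pint_def pz_def by blast
  have "x * y = of_int (a*c) / of_int (b*d)" using x y by (simp add: field_simps)
  thus ?thesis unfolding pz_def using ndvd_mult[OF x(3) y(2)] x(2) by fastforce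
qed

lemma pz_add: "pz p x \<Longrightarrow> pz p y \<Longrightarrow> pz p (x + y)"
proof -
  assume "pz p x" "pz p y"
  then obtain a b c d where x: "x = of_int a / of_int b" "int p dvd a" "\<not> int p dvd b"
    and y: "y = of_int c / of_int d" "int p dvd c" "\<not> int p dvd d" unfolding pz_def by blast
  have b0: "b \<noteq> 0" "d \<noteq> 0" using x y by auto
  have "x + y = of_int (a*d + c*b) / of_int (b*d)" using x y b0 by (simp add: field_simps)
  thus ?thesis unfolding pz_def using ndvd_mult[OF x(3) y(3)] x(2) y(2) by fastforce
qed

lemma pz_uminus: "pz p x \<Longrightarrow> pz p (- x)"
  using pz_mult[of x "-1"] by simp

lemma pz_sum: "(\<And>i. i \<in> A \<Longrightarrow> pz p (f i)) \<Longrightarrow> pz p (sum f A)"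
  by (induction A rule: infinite_finite_induct) (auto intro: pz_add)

lemma cg_refl [simp]: "cg p x x" by (simp add: cg_def)

lemma cg_sym: "cg p x y \<Longrightarrow> cg p y x"
  unfolding cg_def using pz_uminus[of "x - y"] by simp

lemma cg_trans: "cg p x y \<Longrightarrow> cg p y z \<Longrightarrow> cg p x z"
  unfolding cg_def using pz_add[of "x - y" "y - z"] by simp

lemma cg_add: "cg p x y \<Longrightarrow> cg p u v \<Longrightarrow> cg p (x + u) (y + v)"
  unfolding cg_def using pz_add[of "x - y" "u - v"] by (simp add: algebra_simps)

lemma cg_diff: "cg p x y \<Longrightarrow> cg p u v \<Longrightarrow> cg p (x - u) (y - v)"
  unfolding cg_def using pz_add[of "x - y" "-(u - v)"] pz_uminus[of "u - v"] by (simp add: algebra_simps)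

lemma cg_cmult: "pint p c \<Longrightarrow> cg p x y \<Longrightarrow> cg p (c * x) (c * y)"
  unfolding cg_def using pz_mult[of "x - y" c] by (simp add: algebra_simps)

lemma cg_mult: "cg p x y \<Longrightarrow> cg p u v \<Longrightarrow> pint p x \<Longrightarrow> pint p v \<Longrightarrow> cg p (x * u) (y * v)"
proof -
  assume a: "cg p x y" "cg p u v" "pint p x" "pint p v"
  have "cg p (x * u) (x * v)" using cg_cmult[OF a(3) a(2)] .
  moreover have "cg p (v * x) (v * y)" using cg_cmult[OF a(4) a(1)] .
  ultimately show ?thesis using cg_trans by (simp add: mult.commute)
qed

lemma cg_pint: "cg p x y \<Longrightarrow> pint p y \<Longrightarrow> pint p x"
  unfolding cg_def using pz_imp_pint[of "x - y"] pint_add[of "x - y" y] by simp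

lemma cg_power: "cg p x y \<Longrightarrow> pint p y \<Longrightarrow> cg p (x ^ n) (y ^ n)"
proof (induction n)
  case 0 then show ?case by simp
next
  case (Suc n)
  have "pint p x" using cg_pint Suc.prems by blast
  then show ?case using cg_mult[OF Suc.prems(1) Suc.IH[OF Suc.prems]] Suc.prems by simp
qed

lemma cg_sum: "(\<And>i. i \<in> A \<Longrightarrow> cg p (f i) (g i)) \<Longrightarrow> cg p (sum f A) (sum g A)"
  unfolding cg_def using pz_sum[of A "\<lambda>i. f i - g i"] by (simp add: sum_subtractf)

lemma cg_of_int: "int p dvd (a - b) \<Longrightarrow> cg p (of_int a) (of_int b)"
  unfolding cg_def using pz_of_int[of "a - b"] by simp

lemma cg_imp_rat_cong: "cg p a b \<Longrightarrow> rat_cong_mod a b p"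
proof -
  assume "cg p a b"
  then obtain x y where xy: "a - b = of_int x / of_int y" "int p dvd x" "\<not> int p dvd y"
    unfolding cg_def pz_def by blast
  obtain n d where q: "quotient_of (a - b) = (n, d)" by (cases "quotient_of (a - b)")
  have d0: "d > 0" and cop: "coprime n d" using quotient_of_denom_pos[OF q] quotient_of_coprime[OF q] by auto
  have "a - b = of_int n / of_int d" using quotient_of_div[OF q] .
  hence eq: "of_int n / of_int d = (of_int x / of_int y :: rat)" using xy by simp
  have y0: "y \<noteq> 0" using xy(3) by auto
  have "n * y = x * d" using eq d0 y0 by (simp add: field_simps) (metis of_int_eq_iff of_int_mult)
  hence "int p dvd n * y" using xy(2) by (metis dvd_mult2)
  hence pn: "int p dvd n" using pi xy(3) by (simp add: prime_dvd_mult_iff)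
  have "\<not> int p dvd d"
  proof
    assume "int p dvd d"
    with pn cop have "is_unit (int p)" by (meson coprime_common_divisor)
    thus False using pi by (simp add: not_prime_unit)
  qed
  hence "coprime d (int p)" using prime_imp_coprime[OF pi] coprime_commute by blast
  thus ?thesis using pn q unfolding rat_cong_mod_def by simp
qed

end

lemma harm_Suc: "harm_rat (Suc n) = harm_rat n + 1 / of_nat (Suc n)"
  by (simp add: harm_rat_def)

lemma harm_0 [simp]: "harm_rat 0 = 0"
  by (simp add: harm_rat_def)

context
  fixes p :: nat
  assumes pp: "prime p" and p7: "p > 7"
begin

lemma p_gt1: "p > 1" using p7 by simp

lemmas [simp] = pint_of_nat[OF pp] pint_of_int[OF pp] pint_numeral[OF pp] pint_0[OF pp] pint_1[OF pp]
  pint_add[OF pp] pint_mult[OF pp] pint_diff[OF pp] pint_uminus[OF pp] pint_power[OF pp]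

lemma ndvd_k: "0 < k \<Longrightarrow> k < p \<Longrightarrow> \<not> int p dvd int k"
  using nat_dvd_not_less[of k p] by simp

lemma ndvd_pow: "0 < k \<Longrightarrow> k < p \<Longrightarrow> \<not> int p dvd int k ^ m"
  using ndvd_k pi[OF pp] prime_dvd_power by blast

lemma pint_inv_pow: "0 < k \<Longrightarrow> k < p \<Longrightarrow> pint p (1 / of_nat k ^ m)"
  using pint_div_int[OF pp pint_1[OF pp] ndvd_pow] by simp

lemma pint_inv: "0 < k \<Longrightarrow> k < p \<Longrightarrow> pint p (1 / of_nat k)"
  using pint_inv_pow[of k 1] by simp

lemma fermat_int: "0 < k \<Longrightarrow> k < p \<Longrightarrow> int p dvd (int k ^ (p-1) - 1)"
proof -
  assume k: "0 < k" "k < p"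
  have "[k ^ (p-1) = 1] (mod p)" using fermat_theorem[OF pp] nat_dvd_not_less[of k p] k by blast
  hence "[int k ^ (p-1) = 1] (mod int p)" by (metis cong_int_iff of_nat_1 of_nat_power)
  thus ?thesis by (simp add: cong_iff_dvd_diff)
qed

lemma fermat_inv: "0 < k \<Longrightarrow> k < p \<Longrightarrow> m \<le> p - 1 \<Longrightarrow>
   cg p (1 / of_nat k ^ m) (of_nat k ^ (p-1-m))"
proof -
  assume k: "0 < k" "k < p" and m: "m \<le> p - 1"
  have e: "(of_nat k::rat) ^ (p-1-m) * of_nat k ^ m = of_nat k ^ (p-1)"
  proof -
    have "p-1-m+m = p-1" using m by simp
    thus ?thesis by (metis power_add)
  qed
  have "1 / of_nat k ^ m - of_nat k ^ (p-1-m) = of_int (1 - int k ^ (p-1)) * (1 / (of_nat k ^ m :: rat))"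
    using k e by (simp add: field_simps)
  moreover have "pz p (of_int (1 - int k ^ (p-1)))"
    using pz_of_int[OF pp] fermat_int[OF k] by (metis dvd_minus_iff minus_diff_eq)
  ultimately show ?thesis unfolding cg_def using pz_mult[OF pp] pint_inv_pow[OF k] by metis
qed

lemma fermat_pow: "0 < k \<Longrightarrow> k < p \<Longrightarrow> cg p (of_nat k ^ (e + (p-1))) (of_nat k ^ e)"
proof -
  assume k: "0 < k" "k < p"
  have "of_nat k ^ (e + (p-1)) - (of_nat k ^ e :: rat) = of_int (int k ^ e * (int k ^ (p-1) - 1))"
    by (simp add: power_add algebra_simps)
  thus ?thesis unfolding cg_def using pz_of_int[OF pp] fermat_int[OF k] by (metis dvd_mult)
qed

lemma pint_bern: "n \<le> p - 2 \<Longrightarrow> pint p (bernoulli_num n)"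
proof (induction n rule: less_induct)
  case (less n)
  have r: "(\<Sum>i=0..n. of_nat (Suc n choose i) * bernoulli_num i) = (if n = 0 then 1 else 0)"
    by (rule bern_rec)
  have "(\<Sum>i=0..n. of_nat (Suc n choose i) * bernoulli_num i)
      = (\<Sum>i<n. of_nat (Suc n choose i) * bernoulli_num i) + of_nat (Suc n) * bernoulli_num n"
    by (simp add: atLeast0AtMost lessThan_Suc_atMost[symmetric])
  hence "bernoulli_num n = ((if n = 0 then 1 else 0) - (\<Sum>i<n. of_nat (Suc n choose i) * bernoulli_num i)) / of_nat (Suc n)"
    using r by (simp add: field_simps)
  moreover have "pint p ((if n = 0 then 1 else 0) - (\<Sum>i<n. of_nat (Suc n choose i) * bernoulli_num i))"
    using less by (auto intro!: pint_diff[OF pp] pint_sum[OF pp] pint_mult[OF pp] pint_uminus[OF pp] simp: pint_1[OF pp])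
  ultimately show ?case using pint_div_nat[OF pp, of _ "Suc n"] less.prems p7 by simp
qed

lemma powsum_small: "1 \<le> e \<Longrightarrow> e \<le> p - 2 \<Longrightarrow> cg p (\<Sum>k=1..p-1. (of_nat k::rat) ^ e) 0"
proof -
  assume e: "1 \<le> e" "e \<le> p - 2"
  have "(\<Sum>k=1..p-1. (of_nat k::rat) ^ e) = (\<Sum>k<p. (of_nat k::rat) ^ e)"
  proof -
    have "{..<p} = insert 0 {1..p-1}" using p_gt1 by auto
    thus ?thesis using e by simp
  qed
  also have "\<dots> = (\<Sum>i=0..e. of_nat (Suc e choose i) * bernoulli_num i * of_nat p ^ (Suc e - i)) / of_nat (Suc e)"
    using faulhaber[of e p] bp_sub0[of e "of_nat p"] by simp
  finally have eq: "(\<Sum>k=1..p-1. (of_nat k::rat) ^ e) = \<dots>" .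
  have "pz p (\<Sum>i=0..e. of_nat (Suc e choose i) * bernoulli_num i * of_nat p ^ (Suc e - i))"
  proof (rule pz_sum[OF pp])
    fix i assume i: "i \<in> {0..e}"
    hence "Suc e - i = Suc (e - i)" by auto
    hence "of_nat (Suc e choose i) * bernoulli_num i * of_nat p ^ (Suc e - i)
       = of_int (int p) * (of_nat (Suc e choose i) * bernoulli_num i * of_nat p ^ (e - i))" by simp
    moreover have "pint p (of_nat (Suc e choose i) * bernoulli_num i * of_nat p ^ (e - i))"
      using i e pint_bern by (auto intro!: pint_mult[OF pp])
    ultimately show "pz p (of_nat (Suc e choose i) * bernoulli_num i * of_nat p ^ (Suc e - i))"
      using pz_mult[OF pp pz_of_int[OF pp]] by (metis dvd_refl)
  qed
  moreover have pe: "pint p (1 / of_nat (Suc e))" by (rule pint_inv) (use e p7 in auto)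
  ultimately have "pz p ((\<Sum>i=0..e. of_nat (Suc e choose i) * bernoulli_num i * of_nat p ^ (Suc e - i)) * (1 / of_nat (Suc e)))"
    using pz_mult[OF pp] by blast
  thus ?thesis using eq unfolding cg_def by simp
qed

lemma powsum: "1 \<le> e \<Longrightarrow> e \<le> 2*p - 3 \<Longrightarrow>
  cg p (\<Sum>k=1..p-1. (of_nat k::rat) ^ e) (if e = p - 1 then -1 else 0)"
proof -
  assume e: "1 \<le> e" "e \<le> 2*p - 3"
  consider "e \<le> p - 2" | "e = p - 1" | "e \<ge> p" by linarith
  then show ?thesis
  proof cases
    case 1
    have "e \<noteq> p - 1" using 1 p7 by linarith
    then show ?thesis using powsum_small e 1 by simp
  next
    case 2
    have "cg p (\<Sum>k=1..p-1. (of_nat k::rat) ^ e) (\<Sum>k=1..p-1. 1)"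
      by (rule cg_sum[OF pp]) (use fermat_pow[of _ 0] 2 in auto)
    moreover have "cg p (\<Sum>k=1..p-1. (1::rat)) (-1)"
      using cg_of_int[OF pp, of "int p - 1" "-1"] p_gt1 by (simp add: of_nat_diff)
    ultimately show ?thesis using 2 cg_trans[OF pp] by auto
  next
    case 3
    define e' where "e' = e - (p-1)"
    have ee: "e = e' + (p-1)" "1 \<le> e'" "e' \<le> p - 2" using 3 e p7 by (auto simp: e'_def)
    have c: "cg p (\<Sum>k=1..p-1. (of_nat k::rat) ^ e) (\<Sum>k=1..p-1. (of_nat k::rat) ^ e')"
      unfolding ee(1) by (rule cg_sum[OF pp]) (use fermat_pow in auto)
    have ne: "e \<noteq> p - 1" using 3 p7 by linarith
    show ?thesis using cg_trans[OF pp c powsum_small[OF ee(2,3)]] ne by simp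
  qed
qed

lemma pint_harm: "n < p \<Longrightarrow> pint p (harm_rat n)"
  unfolding harm_rat_def by (auto intro!: pint_sum[OF pp] pint_inv)

lemma harm_cg: "n \<le> p - 1 \<Longrightarrow> cg p (harm_rat n) (\<Sum>k=1..n. (of_nat k::rat) ^ (p-2))"
  unfolding harm_rat_def
  by (rule cg_sum[OF pp]) (use fermat_inv[of _ 1] p7 in \<open>auto simp: numeral_2_eq_2\<close>)

lemma harm_pm1: "cg p (harm_rat (p-1)) 0"
  using harm_cg[of "p-1"] powsum_small[of "p-2"] p7 cg_trans[OF pp] by auto

lemma inv_reflect: "0 < n \<Longrightarrow> n < p \<Longrightarrow> cg p (1 / of_nat (p - n)) (- (1 / of_nat n))"
proof -
  assume n: "0 < n" "n < p"
  have "1 / of_nat (p - n) - (- (1 / of_nat n)) = of_int (int p) * (1 / of_nat (p-n) * (1 / (of_nat n :: rat)))"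
    using n by (simp add: of_nat_diff field_simps)
  moreover have "pint p (1 / of_nat (p-n) * (1 / (of_nat n :: rat)))"
    by (intro pint_mult[OF pp] pint_inv) (use n in auto)
  ultimately show ?thesis unfolding cg_def using pz_mult[OF pp pz_of_int[OF pp]] by (metis dvd_refl)
qed

lemma harm_reflect: "1 \<le> n \<Longrightarrow> n \<le> p \<Longrightarrow> cg p (harm_rat (p - n)) (harm_rat (n - 1))"
proof (induction n rule: dec_induct)
  case base then show ?case using harm_pm1 by simp
next
  case (step n)
  have e1: "p - n = Suc (p - Suc n)" using step by auto
  have "harm_rat (p - Suc n) = harm_rat (p - n) - 1 / of_nat (p - n)"
    unfolding e1 harm_Suc by simp
  moreover have c1: "cg p (harm_rat (p - n)) (harm_rat (n - 1))" using step by simp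
  moreover have c2: "cg p (1/of_nat(p-n)) (-(1/of_nat n))" by (rule inv_reflect) (use step in auto)
  moreover have "harm_rat (n - 1) - (- (1 / of_nat n)) = harm_rat (Suc n - 1)"
    using step harm_Suc[of "n-1"] by (cases n) auto
  ultimately show ?case using cg_diff[OF pp c1 c2] by simp
qed




lemma pint_half: "pint p (1/2)"
  using pint_inv[of 2] p7 by simp

lemma pint_inv2: assumes "0 < n" "n < p" shows "pint p (1 / (2 * of_nat n))"
proof -
  have e: "1 / (2 * of_nat n) = (1/2) * (1 / (of_nat n :: rat))" by simp
  show ?thesis unfolding e by (rule pint_mult[OF pp pint_half pint_inv[OF assms]])
qed

lemma pint_gg: "0 < n \<Longrightarrow> n < p \<Longrightarrow> pint p (gg n)"
proof -
  assume n: "0 < n" "n < p"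
  have b: "pint p (1 / (2 * of_nat n))" using pint_inv2 n by blast
  have a: "pint p (harm_rat n)" using n pint_harm by simp
  have c: "pint p (1 / of_nat n ^ 4)" using n pint_inv_pow by simp
  show ?thesis unfolding gg_def by (rule pint_mult[OF pp pint_diff[OF pp a b] c])
qed

lemma gg_sym: "0 < n \<Longrightarrow> n < p \<Longrightarrow> cg p (gg (p - n)) (gg n)"
proof -
  assume n: "0 < n" "n < p"
  have h1: "cg p (harm_rat (p - n)) (harm_rat (n - 1))" using harm_reflect[of n] n by simp
  have i1: "cg p (1 / of_nat (p - n)) (- (1 / of_nat n))" using inv_reflect n by simp
  have c0: "cg p (harm_rat (p - n) - (1/2) * (1 / of_nat (p - n))) (harm_rat (n - 1) - (1/2) * (- (1 / of_nat n)))"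
    by (rule cg_diff[OF pp h1 cg_cmult[OF pp pint_half i1]])
  have eqB: "harm_rat (n - 1) - (1/2) * (- (1 / of_nat n)) = harm_rat n - 1 / (2 * of_nat n)"
    using n harm_Suc[of "n - 1"] by (cases n) (auto simp: field_simps)
  have eqA: "harm_rat (p - n) - (1/2) * (1 / of_nat (p - n)) = harm_rat (p - n) - 1 / (2 * of_nat (p - n))"
    by simp
  have d: "cg p (harm_rat (p - n) - 1 / (2 * of_nat (p - n))) (harm_rat n - 1 / (2 * of_nat n))"
    using c0 unfolding eqA eqB .
  have "cg p ((1 / of_nat (p - n)) ^ 4) ((- (1 / of_nat n)) ^ 4)"
    by (rule cg_power[OF pp i1]) (use n pint_inv in simp)
  hence q: "cg p (1 / of_nat (p - n) ^ 4) (1 / of_nat n ^ 4)" by (simp add: power_divide)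
  have pd: "pint p (harm_rat (p - n) - 1 / (2 * of_nat (p - n)))"
  proof -
    have a: "pint p (harm_rat (p - n))" using n pint_harm[of "p-n"] by simp
    have b: "pint p (1 / (2 * of_nat (p-n)))" by (rule pint_inv2) (use n in auto)
    show ?thesis by (rule pint_diff[OF pp a b])
  qed
  show ?thesis unfolding gg_def
    by (rule cg_mult[OF pp d q pd]) (use n pint_inv_pow in simp)
qed

lemma p_odd: "p = 2 * ((p - 1) div 2) + 1"
  using prime_odd_nat[OF pp] p7 by (auto elim!: oddE)

lemma sum_split_even_odd:
  "(\<Sum>n=1..2*h. f n) = (\<Sum>k=1..h. f (2*k)) + (\<Sum>k=1..h. f (2*k - 1))" for f :: "nat \<Rightarrow> rat"
proof (induction h)
  case 0 then show ?case by simp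
next
  case (Suc h)
  have "{1..2 * Suc h} = insert (2*h+2) (insert (2*h+1) {1..2*h})" by auto
  hence "(\<Sum>n=1..2*Suc h. f n) = f (2*h+2) + f (2*h+1) + (\<Sum>n=1..2*h. f n)" by simp
  then show ?case using Suc by (simp add: add_ac)
qed

lemma halfY: "cg p (2 * (\<Sum>k=1..(p-1) div 2. gg k)) (\<Sum>n=1..p-1. gg n)"
proof -
  define h where "h = (p-1) div 2"
  have ph: "p = 2*h+1" using p_odd h_def by simp
  have "{1..p-1} = {1..h} \<union> {h+1..2*h}" using ph by auto
  hence "(\<Sum>n=1..p-1. gg n) = (\<Sum>n=1..h. gg n) + (\<Sum>n=h+1..2*h. gg n)"
    by (simp add: sum.union_disjoint)
  moreover have "(\<Sum>n=h+1..2*h. gg n) = (\<Sum>k=1..h. gg (p - k))"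
    by (rule sum.reindex_bij_witness[where i="\<lambda>k. p - k" and j="\<lambda>n. p - n"]) (use ph in auto)
  ultimately have G: "(\<Sum>n=1..p-1. gg n) = (\<Sum>n=1..h. gg n) + (\<Sum>k=1..h. gg (p - k))" by simp
  have c: "cg p (\<Sum>k=1..h. gg (p - k)) (\<Sum>k=1..h. gg k)"
    by (rule cg_sum[OF pp]) (use gg_sym ph in auto)
  have "cg p ((\<Sum>n=1..h. gg n) + (\<Sum>k=1..h. gg (p - k))) ((\<Sum>n=1..h. gg n) + (\<Sum>k=1..h. gg k))"
    by (rule cg_add[OF pp cg_refl[OF pp] c])
  hence "cg p (\<Sum>n=1..p-1. gg n) (2 * (\<Sum>n=1..h. gg n))" by (simp only: G mult_2)
  thus ?thesis using cg_sym[OF pp] h_def by blast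
qed

lemma halfX: "cg p (2 * (\<Sum>k=1..(p-1) div 2. gg (2*k))) (\<Sum>n=1..p-1. gg n)"
proof -
  define h where "h = (p-1) div 2"
  have ph: "p = 2*h+1" using p_odd h_def by simp
  have ar: "\<And>a. 1 \<le> a \<Longrightarrow> a \<le> h \<Longrightarrow> p - 2*(h+1-a) = 2*a - 1" using ph by arith
  have "(\<Sum>n=1..p-1. gg n) = (\<Sum>k=1..h. gg (2*k)) + (\<Sum>k=1..h. gg (2*k - 1))"
    using sum_split_even_odd[of gg h] ph by simp
  moreover have "(\<Sum>k=1..h. gg (2*k - 1)) = (\<Sum>k=1..h. gg (p - 2*k))"
    by (rule sum.reindex_bij_witness[where i="\<lambda>k. h + 1 - k" and j="\<lambda>k. h + 1 - k"]) (use ph ar in auto)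
  ultimately have G: "(\<Sum>n=1..p-1. gg n) = (\<Sum>k=1..h. gg (2*k)) + (\<Sum>k=1..h. gg (p - 2*k))" by simp
  have c: "cg p (\<Sum>k=1..h. gg (p - 2*k)) (\<Sum>k=1..h. gg (2*k))"
    by (rule cg_sum[OF pp]) (use gg_sym ph in auto)
  have "cg p ((\<Sum>k=1..h. gg (2*k)) + (\<Sum>k=1..h. gg (p - 2*k))) ((\<Sum>k=1..h. gg (2*k)) + (\<Sum>k=1..h. gg (2*k)))"
    by (rule cg_add[OF pp cg_refl[OF pp] c])
  hence "cg p (\<Sum>n=1..p-1. gg n) (2 * (\<Sum>k=1..h. gg (2*k)))" by (simp only: G mult_2)
  thus ?thesis using cg_sym[OF pp] h_def by blast
qed


lemma alg2: "24 * C = (x+4)*(x+3)*(x+2)*(x+1) \<Longrightarrow> (x::rat) \<ge> 0 \<Longrightarrow>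
   - (C / (x+4)) - 1 = (x+5) * (- (x^2+x+6) * ((1/2)^3*(1/3)))"
proof -
  assume h: "24 * C = (x+4)*(x+3)*(x+2)*(x+1)" and x: "x \<ge> 0"
  have e: "C / (x+4) = (x+3)*(x+2)*(x+1)/24"
  proof -
    have "C = (x+4) * ((x+3)*(x+2)*(x+1)/24)" using h by (simp add: algebra_simps)
    thus ?thesis using x by simp
  qed
  show ?thesis unfolding e by (simp add: field_simps power2_eq_square)
qed

lemma binom_cg: "cg p (- (of_nat (p-1 choose (p-5)) / of_nat (p-1))) 1"
proof -
  define q where "q = p - 5"
  have pq: "p = q + 5" using p7 q_def by simp
  have c1: "(p-1 choose (p-5)) = (q+4 choose 4)"
    using binomial_symmetric[of q "q+4"] pq by (simp add: add.commute)
  have a: "fact 4 * fact q * (q+4 choose 4) = (fact (q+4) :: nat)"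
    using binomial_fact_lemma[of 4 "q+4"] by simp
  have f4: "fact 4 = (24::nat)" by (simp add: numeral_eq_Suc)
  have f: "fact (q+4) = (q+4)*(q+3)*(q+2)*(q+1) * (fact q :: nat)"
  proof -
    have "q+4 = Suc (Suc (Suc (Suc q)))" by simp
    hence "fact (q+4) = Suc (Suc (Suc (Suc q))) * (Suc (Suc (Suc q)) * (Suc (Suc q) * (Suc q * (fact q :: nat))))"
      by (simp only: fact_Suc of_nat_id)
    thus ?thesis by (simp add: algebra_simps)
  qed
  have "fact q * (24 * (q+4 choose 4)) = fact q * ((q+4)*(q+3)*(q+2)*(q+1))"
    using a f4 f by (simp add: algebra_simps)
  hence "24 * (q+4 choose 4) = (q+4)*(q+3)*(q+2)*(q+1)"
    using fact_nonzero[of q] by (metis mult_left_cancel)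
  hence "(of_nat (24 * (q+4 choose 4))::rat) = of_nat ((q+4)*(q+3)*(q+2)*(q+1))" by (simp only:)
  hence e: "24 * (of_nat (q+4 choose 4)::rat) = (of_nat q+4)*(of_nat q+3)*(of_nat q+2)*(of_nat q+1)"
    by (simp only: of_nat_mult of_nat_add of_nat_numeral of_nat_1)
  have pq1: "(of_nat (p-1)::rat) = of_nat q + 4" and pq2: "of_int (int p) = (of_nat q + 5 :: rat)"
    using pq by simp_all
  have "- (of_nat (p-1 choose (p-5)) / of_nat (p-1)) - (1::rat)
     = of_int (int p) * (- (of_nat q ^ 2 + of_nat q + 6) * ((1/2)^3 * (1/3)))"
    unfolding c1 pq1 pq2 by (rule alg2[OF e]) simp
  moreover have "pint p (- (of_nat q ^ 2 + of_nat q + 6) * ((1/2)^3 * (1/(3::rat))))"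
  proof -
    have h3: "pint p (1/(3::rat))" using pint_inv[of 3] p7 by simp
    have a: "pint p (of_nat q ^ 2 + of_nat q + (6::rat))" by simp
    show ?thesis by (rule pint_mult[OF pp pint_uminus[OF pp a] pint_mult[OF pp pint_power[OF pp pint_half] h3]])
  qed
  ultimately show ?thesis unfolding cg_def using pz_mult[OF pp pz_of_int[OF pp]] by (metis dvd_refl)
qed


lemma gg_split: "0 < n \<Longrightarrow> gg n = harm_rat (n-1) * (1 / of_nat n ^ 4) + (1/2) * (1 / of_nat n ^ 5)"
proof -
  assume n: "0 < n"
  have h: "harm_rat n = harm_rat (n-1) + 1 / of_nat n" using harm_Suc[of "n-1"] n by simp
  have n0: "(of_nat n::rat) \<noteq> 0" using n by simp
  show ?thesis unfolding gg_def h using n0 by (simp add: field_simps, simp add: eval_nat_numeral)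
qed

lemma inv5_sum: "cg p (\<Sum>n=1..p-1. 1 / (of_nat n::rat) ^ 5) 0"
proof -
  have "cg p (\<Sum>n=1..p-1. 1 / (of_nat n::rat) ^ 5) (\<Sum>n=1..p-1. (of_nat n::rat) ^ (p-1-5))"
  proof (rule cg_sum[OF pp])
    fix i assume i: "i \<in> {1..p-1}"
    show "cg p (1 / (of_nat i::rat) ^ 5) ((of_nat i::rat) ^ (p-1-5))"
      by (rule fermat_inv) (use i p7 in auto)
  qed
  moreover have "cg p (\<Sum>n=1..p-1. (of_nat n::rat) ^ (p-1-5)) 0"
    by (rule powsum_small) (use p7 in auto)
  ultimately show ?thesis using cg_trans[OF pp] by blast
qed

definition cc :: "nat \<Rightarrow> nat \<Rightarrow> rat" where
  "cc q i = of_nat (q - 1 choose i) * bernoulli_num i / of_nat (q - 1)"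

lemma Fh: "(\<Sum>k<n. (of_nat k::rat) ^ (p-2)) = (\<Sum>i=0..p-2. cc p i * of_nat n ^ (p-1-i))"
proof -
  have s: "Suc (p-2) = p - 1" using p7 by simp
  have "(\<Sum>k<n. (of_nat k::rat) ^ (p-2)) = (\<Sum>i=0..p-2. of_nat (Suc (p-2) choose i) * bernoulli_num i * of_nat n ^ (Suc (p-2)-i)) / of_nat (Suc (p-2))"
    using faulhaber[of "p-2" n] bp_sub0[of "p-2" "of_nat n"] by simp
  also have "\<dots> = (\<Sum>i=0..p-2. cc p i * of_nat n ^ (p-1-i))"
    unfolding s cc_def by (simp add: sum_divide_distrib field_simps)
  finally show ?thesis .
qed

lemma harm_Fh: "0 < n \<Longrightarrow> n < p \<Longrightarrow> cg p (harm_rat (n-1)) (\<Sum>k<n. (of_nat k::rat) ^ (p-2))"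
proof -
  assume n: "0 < n" "n < p"
  have "cg p (harm_rat (n-1)) (\<Sum>k=1..n-1. (of_nat k::rat) ^ (p-2))" using harm_cg n by simp
  moreover have "(\<Sum>k=1..n-1. (of_nat k::rat) ^ (p-2)) = (\<Sum>k<n. (of_nat k::rat) ^ (p-2))"
  proof -
    have "{..<n} = insert 0 {1..n-1}" using n by auto
    thus ?thesis using p7 by simp
  qed
  ultimately show ?thesis by simp
qed

lemma pint_cc: "i \<le> p - 2 \<Longrightarrow> pint p (cc p i)"
  unfolding cc_def using pint_bern pint_div_nat[OF pp, of _ "p-1"] p7 by simp

lemma main_A: "cg p (\<Sum>n=1..p-1. harm_rat (n-1) * (1 / of_nat n ^ 4)) (bernoulli_num (p-5))"
proof -
  have step1: "cg p (\<Sum>n=1..p-1. harm_rat (n-1) * (1 / of_nat n ^ 4))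
      (\<Sum>n=1..p-1. (\<Sum>i=0..p-2. cc p i * of_nat n ^ (p-1-i)) * of_nat n ^ (p-1-4))"
  proof (rule cg_sum[OF pp])
    fix n assume n: "n \<in> {1..p-1}"
    have a: "cg p (harm_rat (n-1)) (\<Sum>i=0..p-2. cc p i * of_nat n ^ (p-1-i))"
      using harm_Fh[of n] Fh[of n] n by auto
    have b: "cg p (1 / of_nat n ^ 4) (of_nat n ^ (p-1-4))" by (rule fermat_inv) (use n p7 in auto)
    show "cg p (harm_rat (n-1) * (1 / of_nat n ^ 4)) ((\<Sum>i=0..p-2. cc p i * of_nat n ^ (p-1-i)) * of_nat n ^ (p-1-4))"
      by (rule cg_mult[OF pp a b]) (use n pint_harm in auto)
  qed
  have step2: "(\<Sum>n=1..p-1. (\<Sum>i=0..p-2. cc p i * of_nat n ^ (p-1-i)) * (of_nat n::rat) ^ (p-1-4))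
     = (\<Sum>i=0..p-2. cc p i * (\<Sum>n=1..p-1. (of_nat n::rat) ^ (2*p-6-i)))"
  proof -
    have "(\<Sum>n=1..p-1. (\<Sum>i=0..p-2. cc p i * of_nat n ^ (p-1-i)) * (of_nat n::rat) ^ (p-1-4))
       = (\<Sum>n=1..p-1. \<Sum>i=0..p-2. cc p i * (of_nat n::rat) ^ (2*p-6-i))"
    proof (rule sum.cong[OF refl], unfold sum_distrib_right, rule sum.cong[OF refl])
      fix n i assume i: "i \<in> {0..p-2}"
      have "(p-1-i) + (p-1-4) = 2*p-6-i" using i p7 by auto
      thus "cc p i * of_nat n ^ (p-1-i) * (of_nat n::rat) ^ (p-1-4) = cc p i * of_nat n ^ (2*p-6-i)"
        by (metis mult.assoc power_add)
    qed
    also have "\<dots> = (\<Sum>i=0..p-2. cc p i * (\<Sum>n=1..p-1. (of_nat n::rat) ^ (2*p-6-i)))"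
      by (subst sum.swap) (simp add: sum_distrib_left)
    finally show ?thesis .
  qed
  have step3: "cg p (\<Sum>i=0..p-2. cc p i * (\<Sum>n=1..p-1. (of_nat n::rat) ^ (2*p-6-i)))
      (\<Sum>i=0..p-2. cc p i * (if i = p - 5 then -1 else 0))"
  proof (rule cg_sum[OF pp])
    fix i assume i: "i \<in> {0..p-2}"
    have "cg p (\<Sum>n=1..p-1. (of_nat n::rat) ^ (2*p-6-i)) (if 2*p-6-i = p-1 then -1 else 0)"
      by (rule powsum) (use i p7 in auto)
    moreover have "(2*p-6-i = p-1) = (i = p - 5)" using i p7 by auto
    ultimately show "cg p (cc p i * (\<Sum>n=1..p-1. (of_nat n::rat) ^ (2*p-6-i))) (cc p i * (if i = p - 5 then -1 else 0))"
      using cg_cmult[OF pp pint_cc] i by simp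
  qed
  have step4: "(\<Sum>i=0..p-2. cc p i * (if i = p - 5 then -1 else (0::rat))) = - cc p (p-5)"
  proof -
    have "(\<Sum>i=0..p-2. cc p i * (if i = p - 5 then -1 else (0::rat))) = (\<Sum>i\<in>{0..p-2}. if i = p - 5 then - cc p i else 0)"
      by (rule sum.cong) auto
    also have "\<dots> = - cc p (p-5)" using p7 by (subst sum.delta) auto
    finally show ?thesis .
  qed
  have step5: "cg p (- cc p (p-5)) (bernoulli_num (p-5))"
  proof -
    have "cg p ((- (of_nat (p-1 choose (p-5)) / of_nat (p-1))) * bernoulli_num (p-5)) (1 * bernoulli_num (p-5))"
      by (rule cg_mult[OF pp binom_cg cg_refl[OF pp]]) (use pint_bern p7 cg_pint[OF pp binom_cg] in auto)
    thus ?thesis unfolding cc_def by simp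
  qed
  have t1: "cg p (\<Sum>n=1..p-1. harm_rat (n-1) * (1 / of_nat n ^ 4))
      (\<Sum>i=0..p-2. cc p i * (\<Sum>n=1..p-1. (of_nat n::rat) ^ (2*p-6-i)))"
    using step1 unfolding step2 .
  have t2: "cg p (\<Sum>i=0..p-2. cc p i * (\<Sum>n=1..p-1. (of_nat n::rat) ^ (2*p-6-i))) (- cc p (p-5))"
    using step3 unfolding step4 .
  show ?thesis using cg_trans[OF pp t1 cg_trans[OF pp t2 step5]] .
qed


lemma G_cg: "cg p (\<Sum>n=1..p-1. gg n) (bernoulli_num (p-5))"
proof -
  have "(\<Sum>n=1..p-1. gg n) = (\<Sum>n=1..p-1. harm_rat (n-1) * (1 / of_nat n ^ 4)) + (1/2) * (\<Sum>n=1..p-1. 1 / (of_nat n::rat) ^ 5)"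
    by (simp add: gg_split sum.distrib sum_distrib_left)
  moreover have "cg p ((\<Sum>n=1..p-1. harm_rat (n-1) * (1 / of_nat n ^ 4)) + (1/2) * (\<Sum>n=1..p-1. 1 / (of_nat n::rat) ^ 5))
     (bernoulli_num (p-5) + (1/2) * 0)"
    by (rule cg_add[OF pp main_A cg_cmult[OF pp pint_half inv5_sum]])
  ultimately show ?thesis by simp
qed

end

lemma alg1: "(x::rat) \<noteq> 0 \<Longrightarrow> (2 * A - B) / x ^ 4 = 32 * ((A - 1/(4*x)) * (1/(16 * x ^ 4))) - (B - 1/(2*x))*(1/(x ^ 4))"
  by (simp add: field_simps)

theorem lemma3p3:
  fixes p :: nat
  assumes "prime p" and "p > 7"
  shows "rat_cong_mod
           (\<Sum>k=1..(p - 1) div 2. (2 * harm_rat (2 * k) - harm_rat k) / of_nat k ^ 4)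
           (31 / 2 * bernoulli_num (p - 5)) p"
proof -
  note pp = assms(1) and p7 = assms(2)
  define h where "h = (p - 1) div 2"
  have S: "(\<Sum>k=1..h. (2 * harm_rat (2 * k) - harm_rat k) / of_nat k ^ 4)
      = 32 * (\<Sum>k=1..h. gg (2*k)) - (\<Sum>k=1..h. gg k)"
  proof -
    have "(\<Sum>k=1..h. (2 * harm_rat (2 * k) - harm_rat k) / of_nat k ^ 4) = (\<Sum>k=1..h. 32 * gg (2*k) - gg k)"
    proof (rule sum.cong[OF refl])
      fix k assume k: "k \<in> {1..h}"
      hence k0: "(of_nat k::rat) \<noteq> 0" by simp
      have a: "gg (2*k) = (harm_rat (2*k) - 1/(4* of_nat k)) * (1/(16 * of_nat k ^ 4))"
        unfolding gg_def by (simp add: power_mult_distrib)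
      have b: "gg k = (harm_rat k - 1/(2* of_nat k)) * (1/(of_nat k ^ 4))"
        unfolding gg_def by simp
      show "(2 * harm_rat (2 * k) - harm_rat k) / of_nat k ^ 4 = 32 * gg (2*k) - gg k"
        unfolding a b by (rule alg1[OF k0])
    qed
    thus ?thesis by (simp add: sum_subtractf sum_distrib_left)
  qed
  have X: "cg p (2 * (\<Sum>k=1..h. gg (2*k))) (bernoulli_num (p-5))"
    using cg_trans[OF pp halfX[OF pp p7] G_cg[OF pp p7]] h_def by simp
  have Y: "cg p (2 * (\<Sum>k=1..h. gg k)) (bernoulli_num (p-5))"
    using cg_trans[OF pp halfY[OF pp p7] G_cg[OF pp p7]] h_def by simp
  have "cg p (16 * (2 * (\<Sum>k=1..h. gg (2*k))) - (1/2) * (2 * (\<Sum>k=1..h. gg k)))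
     (16 * bernoulli_num (p-5) - (1/2) * bernoulli_num (p-5))"
    by (rule cg_diff[OF pp cg_cmult[OF pp _ X] cg_cmult[OF pp pint_half[OF pp p7] Y]]) (simp add: pint_of_nat[OF pp, of 16, simplified])
  hence "cg p (\<Sum>k=1..h. (2 * harm_rat (2 * k) - harm_rat k) / of_nat k ^ 4) (31 / 2 * bernoulli_num (p - 5))"
    unfolding S by (simp add: algebra_simps)
  thus ?thesis using cg_imp_rat_cong[OF pp] h_def by simp
qed

end
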